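(* Let $\hat k\in K$, $\hat j\in M\cup\{0\}$, and let $\bar{\boldsymbol{\pi}}$ be an extreme point of $\mathcal{C}_{(\hat k,\hat j)}=\{\boldsymbol{\pi}\in\mathcal{C}:\alpha^{\hat j}_{\hat k}=1\}$. For $j\in M\cup\{0\}$ define $\mathcal{K}^j=\{k\in K:\bar\alpha^j_k>0\}\setminus\{\hat k\}$ if $j=\hat j$ and $\mathcal{K}^j=\{k\in K:\bar\alpha^j_k>0\}$ otherwise, and $\mathcal{T}^j=\{t\in T:\bar\beta^j_t>0\}$. Write $\Phi_{i,j}=\Phi_{i,j}(\bar{\boldsymbol{\pi}})$, $\Psi_j=\Psi_j(\bar{\boldsymbol{\pi}})$. Then: (a) $\bigcap_{j=0}^m\mathcal{T}^j=\emptyset$; (b) for each $i\in N$, $\bar\gamma^0_i=\max_{j\in M}(\Phi_{i,j})^+$, and $\bar\gamma^j_i=\bar\gamma^0_i-\Phi_{i,j}$ for all $j\in M$; (c) $\bar\theta_0=\max_{j\in M}(\Psi_j)^+$, and $\bar\theta_j=\bar\theta_0-\Psi_j$ for all $j\in M$; (d) there exist $U_1\subseteq\{(i,j)\in N\times M:\Phi_{i,j}=0\}$ and $U_2\subseteq\{j\in M:\Psi_j=0\}$ such that $$|U_1|+|U_2|\ \ge\ \sum_{j=0}^m\big(|\mathcal{K}^j|+|\mathcal{T}^j|\big)+\sum_{i=1}^n\mathbb{I}(\bar\gamma^0_i)-\sum_{i=1}^n\sum_{j=1}^m\mathbb{I}(\bar\gamma^0_i)\big(1-\mathbb{I}(\bar\gamma^j_i)\big)+\mathbb{I}(\bar\theta_0)-\sum_{j=1}^m\mathbb{I}(\bar\theta_0)\big(1-\mathbb{I}(\bar\theta_j)\big).$$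 Conversely, if $\bar{\boldsymbol{\pi}}$ has nonnegative $\bar{\boldsymbol{\alpha}}^j,\bar{\boldsymbol{\beta}}^j$ components, $\bar\alpha^{\hat j}_{\hat k}=1$, and its $\bar{\boldsymbol{\gamma}},\bar{\boldsymbol{\theta}}$ components are given by the formulas in (b) and (c), then $\bar{\boldsymbol{\pi}}\in\mathcal{C}_{(\hat k,\hat j)}$.
   Context: Let $N=\{1,\dots,n\}$, $M=\{1,\dots,m\}$, $K=\{1,\dots,\kappa\}$, $T=\{1,\dots,\tau\}$, with data $A^k\in\mathbb{R}^{m\times n}$ (entries $A^k_{j,i}$), $\mathbf{b}^k\in\mathbb{R}^n$, $\mathbf{c}^k\in\mathbb{R}^m$ (entries $c^k_j$), $d_k\in\mathbb{R}$ ($k\in K$), $E\in\mathbb{R}^{\tau\times n}$, $\mathbf{f}\in\mathbb{R}^\tau$. Vectors $\boldsymbol{\pi}=(\boldsymbol{\alpha}^0,\dots,\boldsymbol{\alpha}^m;\boldsymbol{\beta}^0,\dots,\boldsymbol{\beta}^m;\boldsymbol{\gamma}^0,\dots,\boldsymbol{\gamma}^m;\theta_0,\dots,\theta_m)\in\mathbb{R}^{(m+1)(\kappa+\tau+n+1)}$ with $\boldsymbol{\alpha}^j\in\mathbb{R}^\kappa$, $\boldsymbol{\beta}^j\in\mathbb{R}^\tau$, $\boldsymbol{\gamma}^j\in\mathbb{R}^n$, $\theta_j\in\mathbb{R}$. Define $\Phi_{i,j}(\boldsymbol{\pi})=\sum_{k=1}^\kappa\big((A^k_{j,i}+b^k_i)\alpha^j_k-b^k_i\alpha^0_k\big)+\sum_{t=1}^\tau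 E_{t,i}(\beta^j_t-\beta^0_t)$ for $i\in N,j\in M$, and $\Psi_j(\boldsymbol{\pi})=\sum_{k=1}^\kappa\big((c^k_j-d_k)\alpha^j_k+d_k\alpha^0_k\big)+\sum_{t=1}^\tau f_t(\beta^0_t-\beta^j_t)$ for $j\in M$. $\mathcal{C}$ is the set of all $\boldsymbol{\pi}\ge\mathbf{0}$ with $\Phi_{i,j}(\boldsymbol{\pi})+\gamma^j_i-\gamma^0_i=0$ for all $i\in N,j\in M$ and $\Psi_j(\boldsymbol{\pi})+\theta_j-\theta_0=0$ for all $j\in M$. $(a)^+=\max\{a,0\}$; $\mathbb{I}(a)=0$ if $a=0$ and $\mathbb{I}(a)=1$ otherwise. *)

theory Defs
  imports "HOL-Analysis.Analysis"
begin

text \<open>A vector pi = (alpha^0..alpha^m; beta^0..beta^m; gamma^0..gamma^m; theta_0..theta_m).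
  alpha j k = alpha^j_k (j in 0..m, k in 1..kappa), beta j t = beta^j_t (t in 1..tau),
  gamma j i = gamma^j_i (i in 1..n), theta j = theta_j.  Components outside these index
  ranges are required to be 0 (predicate pi_wf), so that the set of well-formed records is
  a faithful copy of R^((m+1)(kappa+tau+n+1)).\<close>

record pivec =
  alpha :: "nat \<Rightarrow> nat \<Rightarrow> real"
  beta  :: "nat \<Rightarrow> nat \<Rightarrow> real"
  gamma :: "nat \<Rightarrow> nat \<Rightarrow> real"
  theta :: "nat \<Rightarrow> real"

definition pi_wf :: "nat \<Rightarrow> nat \<Rightarrow> nat \<Rightarrow> nat \<Rightarrow> pivec \<Rightarrow> bool" where
  "pi_wf m n \<kappa> \<tau> p \<longleftrightarrow>
     (\<forall>j k. \<not> (j \<le> m \<and> k \<in> {1..\<kappa>}) \<longrightarrow> alpha p j k = 0) \<and>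
     (\<forall>j t. \<not> (j \<le> m \<and> t \<in> {1..\<tau>}) \<longrightarrow> beta p j t = 0) \<and>
     (\<forall>j i. \<not> (j \<le> m \<and> i \<in> {1..n}) \<longrightarrow> gamma p j i = 0) \<and>
     (\<forall>j. \<not> j \<le> m \<longrightarrow> theta p j = 0)"

definition pcomb :: "real \<Rightarrow> pivec \<Rightarrow> pivec \<Rightarrow> pivec" where
  "pcomb l p q = \<lparr> alpha = (\<lambda>j k. l * alpha p j k + (1 - l) * alpha q j k),
                   beta  = (\<lambda>j t. l * beta p j t + (1 - l) * beta q j t),
                   gamma = (\<lambda>j i. l * gamma p j i + (1 - l) * gamma q j i),
                   theta = (\<lambda>j. l * theta p j + (1 - l) * theta q j) \<rparr>"

definition is_extreme :: "pivec \<Rightarrow> pivec set \<Rightarrow> bool" where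
  "is_extreme x S \<longleftrightarrow> x \<in> S \<and>
     \<not> (\<exists>p\<in>S. \<exists>q\<in>S. p \<noteq> q \<and> (\<exists>l. 0 < l \<and> l < 1 \<and> x = pcomb l p q))"

text \<open>Data: A k j i = A^k_{j,i}, b k i = b^k_i, c k j = c^k_j, d k = d_k, E t i = E_{t,i}, f t = f_t.\<close>

definition Phi :: "nat \<Rightarrow> nat \<Rightarrow> (nat \<Rightarrow> nat \<Rightarrow> nat \<Rightarrow> real) \<Rightarrow> (nat \<Rightarrow> nat \<Rightarrow> real)
    \<Rightarrow> (nat \<Rightarrow> nat \<Rightarrow> real) \<Rightarrow> nat \<Rightarrow> nat \<Rightarrow> pivec \<Rightarrow> real" where
  "Phi \<kappa> \<tau> A b E i j p =
     (\<Sum>k=1..\<kappa>. (A k j i + b k i) * alpha p j k - b k i * alpha p 0 k)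
     + (\<Sum>t=1..\<tau>. E t i * (beta p j t - beta p 0 t))"

definition Psi :: "nat \<Rightarrow> nat \<Rightarrow> (nat \<Rightarrow> nat \<Rightarrow> real) \<Rightarrow> (nat \<Rightarrow> real) \<Rightarrow> (nat \<Rightarrow> real)
    \<Rightarrow> nat \<Rightarrow> pivec \<Rightarrow> real" where
  "Psi \<kappa> \<tau> c d f j p =
     (\<Sum>k=1..\<kappa>. (c k j - d k) * alpha p j k + d k * alpha p 0 k)
     + (\<Sum>t=1..\<tau>. f t * (beta p 0 t - beta p j t))"

definition Cset :: "nat \<Rightarrow> nat \<Rightarrow> nat \<Rightarrow> nat \<Rightarrow> (nat \<Rightarrow> nat \<Rightarrow> nat \<Rightarrow> real)
    \<Rightarrow> (nat \<Rightarrow> nat \<Rightarrow> real) \<Rightarrow> (nat \<Rightarrow> nat \<Rightarrow> real) \<Rightarrow> (nat \<Rightarrow> real)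
    \<Rightarrow> (nat \<Rightarrow> nat \<Rightarrow> real) \<Rightarrow> (nat \<Rightarrow> real) \<Rightarrow> pivec set" where
  "Cset m n \<kappa> \<tau> A b c d E f = {p. pi_wf m n \<kappa> \<tau> p \<and>
     (\<forall>j\<le>m. (\<forall>k\<in>{1..\<kappa>}. 0 \<le> alpha p j k) \<and> (\<forall>t\<in>{1..\<tau>}. 0 \<le> beta p j t)
            \<and> (\<forall>i\<in>{1..n}. 0 \<le> gamma p j i) \<and> 0 \<le> theta p j) \<and>
     (\<forall>i\<in>{1..n}. \<forall>j\<in>{1..m}. Phi \<kappa> \<tau> A b E i j p + gamma p j i - gamma p 0 i = 0) \<and>
     (\<forall>j\<in>{1..m}. Psi \<kappa> \<tau> c d f j p + theta p j - theta p 0 = 0)}"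

definition pos :: "real \<Rightarrow> real" where "pos a = max a 0"

definition ind :: "real \<Rightarrow> int" where "ind a = (if a = 0 then 0 else 1)"

end

theory Submission
  imports Defs
begin

lemma kernel_exists:
  fixes c :: "'r \<Rightarrow> 'v \<Rightarrow> real"
  assumes "finite R"
  shows "finite S \<Longrightarrow> card R < card S \<Longrightarrow>
    \<exists>x. (\<forall>v. v \<notin> S \<longrightarrow> x v = 0) \<and> (\<exists>v\<in>S. x v \<noteq> 0) \<and> (\<forall>r\<in>R. (\<Sum>v\<in>S. c r v * x v) = 0)"
  using assms
proof (induction R arbitrary: S c rule: finite_induct)
  case empty
  then obtain v where v: "v \<in> S" by fastforce
  show ?case
    by (rule exI[of _ "\<lambda>w. if w = v then 1 else 0"]) (use v in auto)
next
  case (insert r R0)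
  show ?case
  proof (cases "\<forall>v\<in>S. c r v = 0")
    case True
    have "card R0 < card S" using insert by simp
    then obtain x where x: "\<forall>v. v \<notin> S \<longrightarrow> x v = 0" "\<exists>v\<in>S. x v \<noteq> 0"
       "\<forall>r\<in>R0. (\<Sum>v\<in>S. c r v * x v) = 0"
      using insert.IH[of S c] insert.prems by blast
    show ?thesis using x True by (intro exI[of _ x]) auto
  next
    case False
    then obtain v0 where v0: "v0 \<in> S" "c r v0 \<noteq> 0" by blast
    define e where "e = c r"
    define c' where "c' = (\<lambda>r' v. c r' v - c r' v0 * e v / e v0)"
    have cS: "card (S - {v0}) = card S - 1" using v0 insert.prems by simp
    have "card R0 < card (S - {v0})" using insert cS by simp
    then obtain y where y: "\<forall>v. v \<notin> S - {v0} \<longrightarrow> y v = 0" "\<exists>v\<in>S - {v0}. y v \<noteq> 0"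
       "\<forall>r\<in>R0. (\<Sum>v\<in>S - {v0}. c' r v * y v) = 0"
      using insert.IH[of "S - {v0}" c'] insert.prems by blast
    define x where "x = y(v0 := - (\<Sum>v\<in>S - {v0}. e v * y v) / e v0)"
    have e0: "e v0 \<noteq> 0" using v0 e_def by simp
    have xS: "(\<Sum>v\<in>S - {v0}. g v * x v) = (\<Sum>v\<in>S - {v0}. g v * y v)" for g
      by (rule sum.cong) (auto simp: x_def)
    have sp: "(\<Sum>v\<in>S. g v * x v) = g v0 * x v0 + (\<Sum>v\<in>S - {v0}. g v * y v)" for g
      using sum.remove[OF insert.prems(1) v0(1), of "\<lambda>v. g v * x v"] xS by simp
    have r1: "(\<Sum>v\<in>S. c r v * x v) = 0"
      using sp[of "c r"] e0 by (simp add: x_def e_def[symmetric] field_simps)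
    have r2: "(\<Sum>v\<in>S. c r' v * x v) = 0" if "r' \<in> R0" for r'
    proof -
      have "0 = (\<Sum>v\<in>S - {v0}. c' r' v * y v)" using y(3) that by simp
      also have "\<dots> = (\<Sum>v\<in>S - {v0}. c r' v * y v) - c r' v0 / e v0 * (\<Sum>v\<in>S - {v0}. e v * y v)"
        by (simp add: c'_def sum_subtractf sum_distrib_left algebra_simps)
      also have "\<dots> = (\<Sum>v\<in>S. c r' v * x v)"
        using sp[of "c r'"] e0 by (simp add: x_def field_simps)
      finally show ?thesis by simp
    qed
    show ?thesis
    proof (intro exI[of _ x] conjI)
      show "\<forall>v. v \<notin> S \<longrightarrow> x v = 0" using y(1) v0 by (auto simp: x_def)
      show "\<exists>v\<in>S. x v \<noteq> 0" using y(2) by (auto simp: x_def)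
      show "\<forall>r\<in>insert r R0. (\<Sum>v\<in>S. c r v * x v) = 0" using r1 r2 by auto
    qed
  qed
qed

definition lin :: "(('v \<Rightarrow> real) \<Rightarrow> real) \<Rightarrow> bool" where
  "lin L \<longleftrightarrow> (\<forall>x y a b. L (\<lambda>v. a * x v + b * y v) = a * L x + b * L y)"

lemma lin_expand:
  assumes "lin L" "finite S"
  shows "(\<forall>v. v \<notin> S \<longrightarrow> x v = 0) \<Longrightarrow> L x = (\<Sum>v\<in>S. L (\<lambda>w. if w = v then 1 else 0) * x v)"
  using assms(2)
proof (induction S arbitrary: x rule: finite_induct)
  case empty
  have "x = (\<lambda>v. 0 * x v + 0 * x v)" using empty by auto
  then have "L x = 0 * L x + 0 * L x" using assms(1) unfolding lin_def by metis
  then show ?case by simp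
next
  case (insert v S0)
  define x' where "x' = x(v := 0)"
  have x'0: "\<forall>w. w \<notin> S0 \<longrightarrow> x' w = 0" using insert by (auto simp: x'_def)
  have "x = (\<lambda>w. x v * (if w = v then 1 else 0) + 1 * x' w)" by (auto simp: x'_def)
  then have "L x = x v * L (\<lambda>w. if w = v then 1 else 0) + 1 * L x'"
    using assms(1) unfolding lin_def by metis
  also have "L x' = (\<Sum>w\<in>S0. L (\<lambda>u. if u = w then 1 else 0) * x' w)" using insert.IH x'0 by simp
  also have "\<dots> = (\<Sum>w\<in>S0. L (\<lambda>u. if u = w then 1 else 0) * x w)"
    by (rule sum.cong) (use insert in \<open>auto simp: x'_def\<close>)
  finally show ?case using insert by (simp add: algebra_simps)
qed

lemma kernel_lin:
  assumes "finite R" "finite S" "card R < card S" "\<forall>r\<in>R. lin (L r)"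
  shows "\<exists>x. (\<forall>v. v \<notin> S \<longrightarrow> x v = 0) \<and> (\<exists>v\<in>S. x v \<noteq> 0) \<and> (\<forall>r\<in>R. L r x = 0)"
proof -
  obtain x where x: "\<forall>v. v \<notin> S \<longrightarrow> x v = 0" "\<exists>v\<in>S. x v \<noteq> 0"
    "\<forall>r\<in>R. (\<Sum>v\<in>S. L r (\<lambda>w. if w = v then 1 else 0) * x v) = 0"
    using kernel_exists[OF assms(1,2,3), of "\<lambda>r v. L r (\<lambda>w. if w = v then 1 else 0)"] by blast
  show ?thesis using x lin_expand[OF _ assms(2)] assms(4) by (intro exI[of _ x]) auto
qed

datatype vidx = VA nat nat | VB nat nat | VG nat nat | VT nat
datatype ridx = RP nat nat | RS nat

definition mkrec :: "(vidx \<Rightarrow> real) \<Rightarrow> pivec" where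
  "mkrec x = \<lparr>alpha = (\<lambda>j k. x (VA j k)), beta = (\<lambda>j t. x (VB j t)),
              gamma = (\<lambda>j i. x (VG j i)), theta = (\<lambda>j. x (VT j))\<rparr>"

definition padd :: "pivec \<Rightarrow> real \<Rightarrow> pivec \<Rightarrow> pivec" where
  "padd p e q = \<lparr>alpha = (\<lambda>j k. alpha p j k + e * alpha q j k),
                 beta = (\<lambda>j t. beta p j t + e * beta q j t),
                 gamma = (\<lambda>j i. gamma p j i + e * gamma q j i),
                 theta = (\<lambda>j. theta p j + e * theta q j)\<rparr>"

definition val :: "pivec \<Rightarrow> vidx \<Rightarrow> real" where
  "val p v = (case v of VA j k \<Rightarrow> alpha p j k | VB j t \<Rightarrow> beta p j t
               | VG j i \<Rightarrow> gamma p j i | VT j \<Rightarrow> theta p j)"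

lemma pcomb_half: "pcomb (1/2) (padd p e q) (padd p (-e) q) = p"
  by (simp add: pcomb_def padd_def algebra_simps)

lemma val_padd_mkrec: "val (padd p e (mkrec x)) v = val p v + e * x v"
  by (cases v) (simp_all add: val_def padd_def mkrec_def)

definition Lrow :: "nat \<Rightarrow> nat \<Rightarrow> (nat \<Rightarrow> nat \<Rightarrow> nat \<Rightarrow> real)
    \<Rightarrow> (nat \<Rightarrow> nat \<Rightarrow> real) \<Rightarrow> (nat \<Rightarrow> nat \<Rightarrow> real) \<Rightarrow> (nat \<Rightarrow> real)
    \<Rightarrow> (nat \<Rightarrow> nat \<Rightarrow> real) \<Rightarrow> (nat \<Rightarrow> real) \<Rightarrow> ridx \<Rightarrow> (vidx \<Rightarrow> real) \<Rightarrow> real" where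
  "Lrow \<kappa> \<tau> A b c d E f r x = (case r of
      RP i j \<Rightarrow> Phi \<kappa> \<tau> A b E i j (mkrec x) + x (VG j i) - x (VG 0 i)
    | RS j \<Rightarrow> Psi \<kappa> \<tau> c d f j (mkrec x) + x (VT j) - x (VT 0))"

definition Rows :: "nat \<Rightarrow> nat \<Rightarrow> ridx set" where
  "Rows m n = (\<lambda>(i,j). RP i j) ` ({1..n} \<times> {1..m}) \<union> RS ` {1..m}"

lemma card_Rows: "card (Rows m n) = n * m + m"
proof -
  have "card ((\<lambda>(i,j). RP i j) ` ({1..n} \<times> {1..m})) = n * m"
    by (subst card_image) (auto simp: inj_on_def card_cartesian_product)
  moreover have "card (RS ` {1..m}) = m" by (subst card_image) (auto simp: inj_on_def)
  ultimately show ?thesis unfolding Rows_def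
    by (subst card_Un_disjoint) auto
qed

lemma finite_Rows: "finite (Rows m n)" by (simp add: Rows_def)

definition Supp :: "nat \<Rightarrow> nat \<Rightarrow> nat \<Rightarrow> nat \<Rightarrow> nat \<Rightarrow> nat \<Rightarrow> pivec \<Rightarrow> vidx set" where
  "Supp m n \<kappa> \<tau> jh kh p =
     (\<lambda>(j,k). VA j k) ` {(j,k). j \<le> m \<and> k \<in> {1..\<kappa>} \<and> alpha p j k > 0 \<and> (j,k) \<noteq> (jh,kh)}
   \<union> (\<lambda>(j,t). VB j t) ` {(j,t). j \<le> m \<and> t \<in> {1..\<tau>} \<and> beta p j t > 0}
   \<union> (\<lambda>(j,i). VG j i) ` {(j,i). j \<le> m \<and> i \<in> {1..n} \<and> gamma p j i \<noteq> 0}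
   \<union> VT ` {j. j \<le> m \<and> theta p j \<noteq> 0}"

definition plin :: "real \<Rightarrow> pivec \<Rightarrow> real \<Rightarrow> pivec \<Rightarrow> pivec" where
  "plin a p e q = \<lparr>alpha = (\<lambda>j k. a * alpha p j k + e * alpha q j k),
                 beta = (\<lambda>j t. a * beta p j t + e * beta q j t),
                 gamma = (\<lambda>j i. a * gamma p j i + e * gamma q j i),
                 theta = (\<lambda>j. a * theta p j + e * theta q j)\<rparr>"

lemma Phi_plin: "Phi \<kappa> \<tau> A b E i j (plin a p e q) = a * Phi \<kappa> \<tau> A b E i j p + e * Phi \<kappa> \<tau> A b E i j q"
proof -
  have 1: "(\<Sum>k=1..\<kappa>. (A k j i + b k i) * alpha (plin a p e q) j k - b k i * alpha (plin a p e q) 0 k)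
     = a * (\<Sum>k=1..\<kappa>. (A k j i + b k i) * alpha p j k - b k i * alpha p 0 k) + e * (\<Sum>k=1..\<kappa>. (A k j i + b k i) * alpha q j k - b k i * alpha q 0 k)"
    by (simp add: plin_def sum_distrib_left flip: sum.distrib) (rule sum.cong, simp, simp add: algebra_simps)
  have 2: "(\<Sum>t=1..\<tau>. E t i * (beta (plin a p e q) j t - beta (plin a p e q) 0 t))
     = a * (\<Sum>t=1..\<tau>. E t i * (beta p j t - beta p 0 t)) + e * (\<Sum>t=1..\<tau>. E t i * (beta q j t - beta q 0 t))"
    by (simp add: plin_def sum_distrib_left flip: sum.distrib) (rule sum.cong, simp, simp add: algebra_simps)
  show ?thesis unfolding Phi_def 1 2 by (simp add: algebra_simps)
qed

lemma Psi_plin: "Psi \<kappa> \<tau> c d f j (plin a p e q) = a * Psi \<kappa> \<tau> c d f j p + e * Psi \<kappa> \<tau> c d f j q"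
proof -
  have 1: "(\<Sum>k=1..\<kappa>. (c k j - d k) * alpha (plin a p e q) j k + d k * alpha (plin a p e q) 0 k)
     = a * (\<Sum>k=1..\<kappa>. (c k j - d k) * alpha p j k + d k * alpha p 0 k) + e * (\<Sum>k=1..\<kappa>. (c k j - d k) * alpha q j k + d k * alpha q 0 k)"
    by (simp add: plin_def sum_distrib_left flip: sum.distrib) (rule sum.cong, simp, simp add: algebra_simps)
  have 2: "(\<Sum>t=1..\<tau>. f t * (beta (plin a p e q) 0 t - beta (plin a p e q) j t))
     = a * (\<Sum>t=1..\<tau>. f t * (beta p 0 t - beta p j t)) + e * (\<Sum>t=1..\<tau>. f t * (beta q 0 t - beta q j t))"
    by (simp add: plin_def sum_distrib_left flip: sum.distrib) (rule sum.cong, simp, simp add: algebra_simps)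
  show ?thesis unfolding Psi_def 1 2 by (simp add: algebra_simps)
qed

lemma padd_plin: "padd p e q = plin 1 p e q" by (simp add: padd_def plin_def)
lemma mkrec_lin: "mkrec (\<lambda>v. a * x v + e * y v) = plin a (mkrec x) e (mkrec y)"
  by (simp add: mkrec_def plin_def)

lemma Phi_padd: "Phi \<kappa> \<tau> A b E i j (padd p e q) = Phi \<kappa> \<tau> A b E i j p + e * Phi \<kappa> \<tau> A b E i j q"
  by (simp add: padd_plin Phi_plin)
lemma Psi_padd: "Psi \<kappa> \<tau> c d f j (padd p e q) = Psi \<kappa> \<tau> c d f j p + e * Psi \<kappa> \<tau> c d f j q"
  by (simp add: padd_plin Psi_plin)

lemma lin_Lrow: "lin (Lrow \<kappa> \<tau> A b c d E f r)"
  unfolding lin_def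
proof (intro allI)
  fix x y :: "vidx \<Rightarrow> real" and a e :: real
  show "Lrow \<kappa> \<tau> A b c d E f r (\<lambda>v. a * x v + e * y v) =
       a * Lrow \<kappa> \<tau> A b c d E f r x + e * Lrow \<kappa> \<tau> A b c d E f r y"
    by (cases r) (simp_all add: Lrow_def mkrec_lin Phi_plin Psi_plin algebra_simps)
qed

lemma finite_Supp: "finite (Supp m n \<kappa> \<tau> jh kh p)"
proof -
  have "Supp m n \<kappa> \<tau> jh kh p \<subseteq> (\<lambda>(j,k). VA j k) ` ({..m} \<times> {1..\<kappa>}) \<union> (\<lambda>(j,k). VB j k) ` ({..m} \<times> {1..\<tau>})
     \<union> (\<lambda>(j,k). VG j k) ` ({..m} \<times> {1..n}) \<union> VT ` {..m}"
    unfolding Supp_def by auto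
  then show ?thesis by (rule finite_subset) auto
qed
lemma RP_in_Rows: "i \<in> {1..n} \<Longrightarrow> j \<in> {1..m} \<Longrightarrow> RP i j \<in> Rows m n"
  unfolding Rows_def by (rule UnI1, rule image_eqI[of _ _ "(i,j)"]) auto
lemma RS_in_Rows: "j \<in> {1..m} \<Longrightarrow> RS j \<in> Rows m n"
  unfolding Rows_def by auto

lemma Cset_padd:
  assumes p: "p \<in> Cset m n \<kappa> \<tau> A b c d E f"
    and sup: "\<forall>v. v \<notin> Supp m n \<kappa> \<tau> jh kh p \<longrightarrow> x v = 0"
    and rows: "\<forall>r\<in>Rows m n. Lrow \<kappa> \<tau> A b c d E f r x = 0"
    and eps: "\<forall>v\<in>Supp m n \<kappa> \<tau> jh kh p. \<bar>e\<bar> * \<bar>x v\<bar> < val p v"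
  shows "padd p e (mkrec x) \<in> Cset m n \<kappa> \<tau> A b c d E f"
proof -
  let ?q = "padd p e (mkrec x)"
  let ?S = "Supp m n \<kappa> \<tau> jh kh p"
  have nn: "0 \<le> val ?q v" if "0 \<le> val p v" for v
  proof (cases "v \<in> ?S")
    case True
    have "- (\<bar>e\<bar> * \<bar>x v\<bar>) \<le> e * x v" by (metis abs_ge_minus_self abs_mult minus_le_iff)
    moreover have "\<bar>e\<bar> * \<bar>x v\<bar> < val p v" using eps True by blast
    ultimately show ?thesis by (simp add: val_padd_mkrec)
  next
    case False then show ?thesis using sup that by (simp add: val_padd_mkrec)
  qed
  have wf: "pi_wf m n \<kappa> \<tau> p" using p by (simp add: Cset_def)
  have s1: "VA j k \<notin> ?S" if "\<not> (j \<le> m \<and> k \<in> {1..\<kappa>})" for j k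
    using that unfolding Supp_def by auto
  have s2: "VB j k \<notin> ?S" if "\<not> (j \<le> m \<and> k \<in> {1..\<tau>})" for j k
    using that unfolding Supp_def by auto
  have s3: "VG j k \<notin> ?S" if "\<not> (j \<le> m \<and> k \<in> {1..n})" for j k
    using that unfolding Supp_def by auto
  have s4: "VT j \<notin> ?S" if "\<not> j \<le> m" for j
    using that unfolding Supp_def by auto
  have wfq: "pi_wf m n \<kappa> \<tau> ?q"
    using wf sup s1 s2 s3 s4 unfolding pi_wf_def by (simp add: padd_def mkrec_def)
  have nA: "0 \<le> alpha ?q j k" if "j \<le> m" "k \<in> {1..\<kappa>}" for j k
    using nn[of "VA j k"] p that by (simp add: val_def Cset_def)
  have nB: "0 \<le> beta ?q j k" if "j \<le> m" "k \<in> {1..\<tau>}" for j k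
    using nn[of "VB j k"] p that by (simp add: val_def Cset_def)
  have nG: "0 \<le> gamma ?q j k" if "j \<le> m" "k \<in> {1..n}" for j k
    using nn[of "VG j k"] p that by (simp add: val_def Cset_def)
  have nT: "0 \<le> theta ?q j" if "j \<le> m" for j
    using nn[of "VT j"] p that by (simp add: val_def Cset_def)
  have eP: "Phi \<kappa> \<tau> A b E i j ?q + gamma ?q j i - gamma ?q 0 i = 0" if "i \<in> {1..n}" "j \<in> {1..m}" for i j
  proof -
    have "Lrow \<kappa> \<tau> A b c d E f (RP i j) x = 0" using rows that by (simp add: RP_in_Rows RS_in_Rows)
    then have "Phi \<kappa> \<tau> A b E i j (mkrec x) + x (VG j i) - x (VG 0 i) = 0" by (simp add: Lrow_def)
    moreover have "Phi \<kappa> \<tau> A b E i j p + gamma p j i - gamma p 0 i = 0" using p that by (simp add: Cset_def)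
    moreover have "Phi \<kappa> \<tau> A b E i j ?q + gamma ?q j i - gamma ?q 0 i =
      (Phi \<kappa> \<tau> A b E i j p + gamma p j i - gamma p 0 i) + e * (Phi \<kappa> \<tau> A b E i j (mkrec x) + x (VG j i) - x (VG 0 i))"
      by (simp only: Phi_padd) (simp add: padd_def mkrec_def algebra_simps)
    ultimately show ?thesis by simp
  qed
  have eS: "Psi \<kappa> \<tau> c d f j ?q + theta ?q j - theta ?q 0 = 0" if "j \<in> {1..m}" for j
  proof -
    have "Lrow \<kappa> \<tau> A b c d E f (RS j) x = 0" using rows that by (simp add: RP_in_Rows RS_in_Rows)
    then have "Psi \<kappa> \<tau> c d f j (mkrec x) + x (VT j) - x (VT 0) = 0" by (simp add: Lrow_def)
    moreover have "Psi \<kappa> \<tau> c d f j p + theta p j - theta p 0 = 0" using p that by (simp add: Cset_def)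
    moreover have "Psi \<kappa> \<tau> c d f j ?q + theta ?q j - theta ?q 0 =
      (Psi \<kappa> \<tau> c d f j p + theta p j - theta p 0) + e * (Psi \<kappa> \<tau> c d f j (mkrec x) + x (VT j) - x (VT 0))"
      by (simp only: Psi_padd) (simp add: padd_def mkrec_def algebra_simps)
    ultimately show ?thesis by simp
  qed
  show ?thesis unfolding Cset_def using wfq nA nB nG nT eP eS by auto
qed

lemma val_pos_Supp:
  assumes "p \<in> Cset m n \<kappa> \<tau> A b c d E f" "v \<in> Supp m n \<kappa> \<tau> jh kh p"
  shows "0 < val p v"
proof -
  have g: "0 \<le> gamma p j i" if "j \<le> m" "i \<in> {1..n}" for j i using assms(1) that by (simp add: Cset_def)
  have t: "0 \<le> theta p j" if "j \<le> m" for j using assms(1) that by (simp add: Cset_def)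
  from assms(2) show ?thesis unfolding Supp_def
  proof (elim UnE)
    assume "v \<in> VT ` {j. j \<le> m \<and> theta p j \<noteq> 0}"
    then obtain j where "v = VT j" "j \<le> m" "theta p j \<noteq> 0" by blast
    then show ?thesis using t[of j] by (simp add: val_def)
  next
    assume "v \<in> (\<lambda>(j,i). VG j i) ` {(j,i). j \<le> m \<and> i \<in> {1..n} \<and> gamma p j i \<noteq> 0}"
    then obtain j i where "v = VG j i" "j \<le> m" "i \<in> {1..n}" "gamma p j i \<noteq> 0" by fastforce
    then show ?thesis using g[of j i] by (simp add: val_def)
  next
    assume "v \<in> (\<lambda>(j,i). VB j i) ` {(j,t). j \<le> m \<and> t \<in> {1..\<tau>} \<and> beta p j t > 0}"
    then obtain j i where "v = VB j i" "beta p j i > 0" by fastforce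
    then show ?thesis by (simp add: val_def)
  next
    assume "v \<in> (\<lambda>(j,i). VA j i) ` {(j,k). j \<le> m \<and> k \<in> {1..\<kappa>} \<and> alpha p j k > 0 \<and> (j,k) \<noteq> (jh,kh)}"
    then obtain j i where "v = VA j i" "alpha p j i > 0" by fastforce
    then show ?thesis by (simp add: val_def)
  qed
qed

lemma no_pert:
  assumes ext: "is_extreme p {p \<in> Cset m n \<kappa> \<tau> A b c d E f. alpha p jh kh = 1}"
    and sup: "\<forall>v. v \<notin> Supp m n \<kappa> \<tau> jh kh p \<longrightarrow> x v = 0"
    and rows: "\<forall>r\<in>Rows m n. Lrow \<kappa> \<tau> A b c d E f r x = 0"
  shows "\<forall>v\<in>Supp m n \<kappa> \<tau> jh kh p. x v = 0"
proof (rule ccontr)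
  let ?S = "Supp m n \<kappa> \<tau> jh kh p"
  let ?C = "{p \<in> Cset m n \<kappa> \<tau> A b c d E f. alpha p jh kh = 1}"
  assume "\<not> (\<forall>v\<in>?S. x v = 0)"
  then obtain v0 where v0: "v0 \<in> ?S" "x v0 \<noteq> 0" by blast
  have pC: "p \<in> ?C" using ext by (simp add: is_extreme_def)
  have fS: "finite ?S" by (rule finite_Supp)
  define \<epsilon> where "\<epsilon> = Min ((\<lambda>v. val p v / (\<bar>x v\<bar> + 1)) ` ?S)"
  have vp: "\<And>v. v \<in> ?S \<Longrightarrow> 0 < val p v" using val_pos_Supp pC by blast
  have epos: "0 < \<epsilon>" unfolding \<epsilon>_def using fS v0 vp
    by (subst Min_gr_iff) (auto intro!: divide_pos_pos)
  have ele: "\<epsilon> \<le> val p v / (\<bar>x v\<bar> + 1)" if "v \<in> ?S" for v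
    unfolding \<epsilon>_def using fS that by (intro Min_le) auto
  have eps: "\<forall>v\<in>?S. \<bar>e\<bar> * \<bar>x v\<bar> < val p v" if "\<bar>e\<bar> = \<epsilon>" for e
  proof
    fix v assume v: "v \<in> ?S"
    have "\<epsilon> * (\<bar>x v\<bar> + 1) \<le> val p v" using ele[OF v] by (simp add: pos_le_divide_eq add_pos_nonneg)
    then show "\<bar>e\<bar> * \<bar>x v\<bar> < val p v" using that epos by (simp add: algebra_simps)
  qed
  have pCs: "p \<in> Cset m n \<kappa> \<tau> A b c d E f" "alpha p jh kh = 1" using pC by auto
  have nA: "VA jh kh \<notin> ?S" unfolding Supp_def by auto
  have q1: "padd p \<epsilon> (mkrec x) \<in> ?C"
    using Cset_padd[OF pCs(1) sup rows eps[of \<epsilon>]] epos pCs(2) nA sup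
    by (simp add: padd_def mkrec_def)
  have q2: "padd p (-\<epsilon>) (mkrec x) \<in> ?C"
    using Cset_padd[OF pCs(1) sup rows eps[of "-\<epsilon>"]] epos pCs(2) nA sup
    by (simp add: padd_def mkrec_def)
  have ne: "padd p \<epsilon> (mkrec x) \<noteq> padd p (-\<epsilon>) (mkrec x)"
  proof
    assume "padd p \<epsilon> (mkrec x) = padd p (-\<epsilon>) (mkrec x)"
    then have "val (padd p \<epsilon> (mkrec x)) v0 = val (padd p (-\<epsilon>) (mkrec x)) v0" by simp
    then show False using v0 epos by (simp add: val_padd_mkrec)
  qed
  have "p = pcomb (1/2) (padd p \<epsilon> (mkrec x)) (padd p (-\<epsilon>) (mkrec x))" by (simp add: pcomb_half)
  then have "\<exists>p'\<in>?C. \<exists>q\<in>?C. p' \<noteq> q \<and> (\<exists>l. 0 < l \<and> l < 1 \<and> p = pcomb l p' q)"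
    apply -
    apply (rule bexI[OF _ q1], rule bexI[OF _ q2])
    apply (rule conjI[OF ne], rule exI[of _ "1/2"])
    by simp
  then show False using ext unfolding is_extreme_def by blast
qed

lemma card_Supp_le:
  assumes ext: "is_extreme p {p \<in> Cset m n \<kappa> \<tau> A b c d E f. alpha p jh kh = 1}"
  shows "card (Supp m n \<kappa> \<tau> jh kh p) \<le> n * m + m"
proof (rule ccontr)
  assume "\<not> ?thesis"
  then have lt: "card (Rows m n) < card (Supp m n \<kappa> \<tau> jh kh p)" by (simp add: card_Rows)
  have ll: "\<forall>r\<in>Rows m n. lin (Lrow \<kappa> \<tau> A b c d E f r)" using lin_Lrow by blast
  obtain x where x: "\<forall>v. v \<notin> Supp m n \<kappa> \<tau> jh kh p \<longrightarrow> x v = 0"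
    "\<exists>v\<in>Supp m n \<kappa> \<tau> jh kh p. x v \<noteq> 0" "\<forall>r\<in>Rows m n. Lrow \<kappa> \<tau> A b c d E f r x = 0"
    using kernel_lin[OF finite_Rows finite_Supp lt ll] by blast
  show False using no_pert[OF ext x(1) x(3)] x(2) by blast
qed

lemma card_split_filter:
  "finite A \<Longrightarrow> card {j\<in>A. Q j} + card {j\<in>A. \<not> Q j} = card A"
proof -
  assume fA: "finite A"
  have "{j\<in>A. Q j} \<union> {j\<in>A. \<not> Q j} = A" by auto
  moreover have "card ({j\<in>A. Q j} \<union> {j\<in>A. \<not> Q j}) = card {j\<in>A. Q j} + card {j\<in>A. \<not> Q j}"
    using fA by (intro card_Un_disjoint) auto
  ultimately show ?thesis by simp
qed

lemma sum_ind_card: "finite A \<Longrightarrow> (\<Sum>j\<in>A. 1 - ind (g j)) = int (card {j\<in>A. g j = 0})"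
proof -
  assume fA: "finite A"
  have "(\<Sum>j\<in>A. 1 - ind (g j)) = (\<Sum>j\<in>A. if g j = 0 then 1 else 0)"
    by (rule sum.cong) (auto simp: ind_def)
  also have "\<dots> = (\<Sum>j\<in>{j\<in>A. g j = 0}. 1)" using fA by (simp only: sum.inter_filter)
  finally show ?thesis by simp
qed

lemma per_i:
  fixes g P :: "nat \<Rightarrow> real"
  assumes "\<forall>j\<in>{1..m}. g j = g 0 - P j"
  shows "int (card {j\<in>{0..m}. g j \<noteq> 0}) + int (card {j\<in>{1..m}. P j = 0 \<and> g 0 = 0})
       = int m + ind (g 0) - (\<Sum>j=1..m. ind (g 0) * (1 - ind (g j)))"
proof -
  have s: "{j\<in>{0..m}. g j \<noteq> 0} = (if g 0 \<noteq> 0 then {0} else {}) \<union> {j\<in>{1..m}. g j \<noteq> 0}"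
    by (auto simp: Suc_le_eq) (metis gr0I)
  have c1: "card {j\<in>{0..m}. g j \<noteq> 0} = (if g 0 \<noteq> 0 then 1 else 0) + card {j\<in>{1..m}. g j \<noteq> 0}"
    unfolding s by (subst card_Un_disjoint) auto
  have c2: "card {j\<in>{1..m}. g j = 0} + card {j\<in>{1..m}. g j \<noteq> 0} = m"
    using card_split_filter[of "{1..m}" "\<lambda>j. g j = 0"] by simp
  have c3: "(\<Sum>j=1..m. ind (g 0) * (1 - ind (g j))) = ind (g 0) * int (card {j\<in>{1..m}. g j = 0})"
    by (simp add: sum_distrib_left[symmetric] sum_ind_card)
  show ?thesis
  proof (cases "g 0 = 0")
    case True
    have "{j\<in>{1..m}. P j = 0 \<and> g 0 = 0} = {j\<in>{1..m}. g j = 0}" using assms True by auto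
    then show ?thesis using c1 c2 c3 True by (simp add: ind_def)
  next
    case False
    then show ?thesis using c1 c2 c3 by (simp add: ind_def)
  qed
qed

lemma no_pert':
  assumes ext: "is_extreme p {p \<in> Cset m n \<kappa> \<tau> A b c d E f. alpha p jh kh = 1}"
    and sup: "\<forall>v. v \<notin> Supp m n \<kappa> \<tau> jh kh p \<longrightarrow> x v = 0"
    and r1: "\<forall>i\<in>{1..n}. \<forall>j\<in>{1..m}. Lrow \<kappa> \<tau> A b c d E f (RP i j) x = 0"
    and r2: "\<forall>j\<in>{1..m}. Lrow \<kappa> \<tau> A b c d E f (RS j) x = 0"
  shows "\<forall>v\<in>Supp m n \<kappa> \<tau> jh kh p. x v = 0"
proof (rule no_pert[OF ext sup])
  show "\<forall>r\<in>Rows m n. Lrow \<kappa> \<tau> A b c d E f r x = 0"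
    using r1 r2 unfolding Rows_def by auto
qed

lemma partA:
  assumes ext: "is_extreme p {p \<in> Cset m n \<kappa> \<tau> A b c d E f. alpha p jh kh = 1}"
  shows "(\<Inter>j\<in>{0..m}. {t\<in>{1..\<tau>}. beta p j t > 0}) = {}"
proof (rule ccontr)
  assume "\<not> ?thesis"
  then obtain t where "t \<in> (\<Inter>j\<in>{0..m}. {t\<in>{1..\<tau>}. beta p j t > 0})" by blast
  then have t: "t \<in> {1..\<tau>}" "\<forall>j\<le>m. beta p j t > 0" by auto
  define x where "x = (\<lambda>v. case v of VB j t' \<Rightarrow> if j \<le> m \<and> t' = t then 1 else 0 | _ \<Rightarrow> (0::real))"
  have sup: "\<forall>v. v \<notin> Supp m n \<kappa> \<tau> jh kh p \<longrightarrow> x v = 0"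
  proof (intro allI impI)
    fix v assume v: "v \<notin> Supp m n \<kappa> \<tau> jh kh p"
    show "x v = 0"
    proof (cases v)
      case (VB j t')
      show ?thesis
      proof (rule ccontr)
        assume "x v \<noteq> 0"
        then have "j \<le> m" "t' = t" using VB by (auto simp: x_def split: if_splits)
        then have "v \<in> Supp m n \<kappa> \<tau> jh kh p" using VB t unfolding Supp_def by auto
        then show False using v by simp
      qed
    qed (auto simp: x_def)
  qed
  have r1: "\<forall>i\<in>{1..n}. \<forall>j\<in>{1..m}. Lrow \<kappa> \<tau> A b c d E f (RP i j) x = 0"
    by (auto simp: Lrow_def Phi_def mkrec_def x_def)
  have r2: "\<forall>j\<in>{1..m}. Lrow \<kappa> \<tau> A b c d E f (RS j) x = 0"
    by (auto simp: Lrow_def Psi_def mkrec_def x_def)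
  have "VB 0 t \<in> Supp m n \<kappa> \<tau> jh kh p" using t unfolding Supp_def by auto
  then have "x (VB 0 t) = 0" using no_pert'[OF ext sup r1 r2] by blast
  then show False by (simp add: x_def)
qed

lemma partB:
  assumes ext: "is_extreme p {p \<in> Cset m n \<kappa> \<tau> A b c d E f. alpha p jh kh = 1}"
    and hm: "1 \<le> m" and i: "i \<in> {1..n}"
  shows "gamma p 0 i = Max ((\<lambda>j. pos (Phi \<kappa> \<tau> A b E i j p)) ` {1..m})"
proof -
  let ?M = "Max ((\<lambda>j. pos (Phi \<kappa> \<tau> A b E i j p)) ` {1..m})"
  have pC: "p \<in> Cset m n \<kappa> \<tau> A b c d E f" using ext by (simp add: is_extreme_def)
  have g0: "0 \<le> gamma p j i" if "j \<le> m" for j using pC i that by (simp add: Cset_def)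
  have eq: "gamma p j i = gamma p 0 i - Phi \<kappa> \<tau> A b E i j p" if "j \<in> {1..m}" for j
    using pC i that by (simp add: Cset_def algebra_simps)
  have ne: "{1..m} \<noteq> {}" using hm by auto
  have ph: "Phi \<kappa> \<tau> A b E i j p \<le> gamma p 0 i" if "j \<in> {1..m}" for j
    using g0[of j] eq[OF that] that by simp
  have le: "?M \<le> gamma p 0 i"
    using ne g0[of 0] ph by (subst Max_le_iff) (auto simp: pos_def)
  show ?thesis
  proof (rule ccontr)
    assume "gamma p 0 i \<noteq> ?M"
    then have lt: "?M < gamma p 0 i" using le by simp
    have pj: "pos (Phi \<kappa> \<tau> A b E i j p) \<le> ?M" if "j \<in> {1..m}" for j
      using that by (intro Max_ge) auto
    have gpos: "gamma p j i \<noteq> 0" if "j \<le> m" for j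
    proof (cases "j = 0")
      case True
      have "0 \<le> ?M" using pj[of 1] hm by (simp add: pos_def)
      then show ?thesis using True lt by simp
    next
      case False
      then have jm: "j \<in> {1..m}" using that by simp
      have "pos (Phi \<kappa> \<tau> A b E i j p) < gamma p 0 i" using pj[OF jm] lt by linarith
      then show ?thesis using eq[OF jm] by (simp add: pos_def)
    qed
    define x where "x = (\<lambda>v. case v of VG j i' \<Rightarrow> if j \<le> m \<and> i' = i then 1 else 0 | _ \<Rightarrow> (0::real))"
    have sup: "\<forall>v. v \<notin> Supp m n \<kappa> \<tau> jh kh p \<longrightarrow> x v = 0"
    proof (intro allI impI)
      fix v assume v: "v \<notin> Supp m n \<kappa> \<tau> jh kh p"
      show "x v = 0"
      proof (cases v)
        case (VG j i')
        show ?thesis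
        proof (rule ccontr)
          assume "x v \<noteq> 0"
          then have "j \<le> m" "i' = i" using VG by (auto simp: x_def split: if_splits)
          then have "v \<in> Supp m n \<kappa> \<tau> jh kh p" using VG i gpos unfolding Supp_def by auto
          then show False using v by simp
        qed
      qed (auto simp: x_def)
    qed
    have r1: "\<forall>i\<in>{1..n}. \<forall>j\<in>{1..m}. Lrow \<kappa> \<tau> A b c d E f (RP i j) x = 0"
      by (auto simp: Lrow_def Phi_def mkrec_def x_def)
    have r2: "\<forall>j\<in>{1..m}. Lrow \<kappa> \<tau> A b c d E f (RS j) x = 0"
      by (auto simp: Lrow_def Psi_def mkrec_def x_def)
    have "VG 0 i \<in> Supp m n \<kappa> \<tau> jh kh p" using i gpos[of 0] unfolding Supp_def by auto
    then have "x (VG 0 i) = 0" using no_pert'[OF ext sup r1 r2] by blast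
    then show False by (simp add: x_def)
  qed
qed

lemma partC:
  assumes ext: "is_extreme p {p \<in> Cset m n \<kappa> \<tau> A b c d E f. alpha p jh kh = 1}"
    and hm: "1 \<le> m"
  shows "theta p 0 = Max ((\<lambda>j. pos (Psi \<kappa> \<tau> c d f j p)) ` {1..m})"
proof -
  let ?M = "Max ((\<lambda>j. pos (Psi \<kappa> \<tau> c d f j p)) ` {1..m})"
  have pC: "p \<in> Cset m n \<kappa> \<tau> A b c d E f" using ext by (simp add: is_extreme_def)
  have g0: "0 \<le> theta p j" if "j \<le> m" for j using pC that by (simp add: Cset_def)
  have eq: "theta p j = theta p 0 - Psi \<kappa> \<tau> c d f j p" if "j \<in> {1..m}" for j
    using pC that by (simp add: Cset_def algebra_simps)
  have ne: "{1..m} \<noteq> {}" using hm by auto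
  have ph: "Psi \<kappa> \<tau> c d f j p \<le> theta p 0" if "j \<in> {1..m}" for j
    using g0[of j] eq[OF that] that by simp
  have le: "?M \<le> theta p 0"
    using ne g0[of 0] ph by (subst Max_le_iff) (auto simp: pos_def)
  show ?thesis
  proof (rule ccontr)
    assume "theta p 0 \<noteq> ?M"
    then have lt: "?M < theta p 0" using le by simp
    have pj: "pos (Psi \<kappa> \<tau> c d f j p) \<le> ?M" if "j \<in> {1..m}" for j
      using that by (intro Max_ge) auto
    have gpos: "theta p j \<noteq> 0" if "j \<le> m" for j
    proof (cases "j = 0")
      case True
      have "0 \<le> ?M" using pj[of 1] hm by (simp add: pos_def)
      then show ?thesis using True lt by simp
    next
      case False
      then have jm: "j \<in> {1..m}" using that by simp
      have "pos (Psi \<kappa> \<tau> c d f j p) < theta p 0" using pj[OF jm] lt by linarith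
      then show ?thesis using eq[OF jm] by (simp add: pos_def)
    qed
    define x where "x = (\<lambda>v. case v of VT j \<Rightarrow> if j \<le> m then 1 else 0 | _ \<Rightarrow> (0::real))"
    have sup: "\<forall>v. v \<notin> Supp m n \<kappa> \<tau> jh kh p \<longrightarrow> x v = 0"
    proof (intro allI impI)
      fix v assume v: "v \<notin> Supp m n \<kappa> \<tau> jh kh p"
      show "x v = 0"
      proof (cases v)
        case (VT j)
        show ?thesis
        proof (rule ccontr)
          assume "x v \<noteq> 0"
          then have "j \<le> m" using VT by (auto simp: x_def split: if_splits)
          then have "v \<in> Supp m n \<kappa> \<tau> jh kh p" using VT gpos unfolding Supp_def by auto
          then show False using v by simp
        qed
      qed (auto simp: x_def)
    qed
    have r1: "\<forall>i\<in>{1..n}. \<forall>j\<in>{1..m}. Lrow \<kappa> \<tau> A b c d E f (RP i j) x = 0"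
      by (auto simp: Lrow_def Phi_def mkrec_def x_def)
    have r2: "\<forall>j\<in>{1..m}. Lrow \<kappa> \<tau> A b c d E f (RS j) x = 0"
      by (auto simp: Lrow_def Psi_def mkrec_def x_def)
    have "VT 0 \<in> Supp m n \<kappa> \<tau> jh kh p" using gpos[of 0] unfolding Supp_def by auto
    then have "x (VT 0) = 0" using no_pert'[OF ext sup r1 r2] by blast
    then show False by (simp add: x_def)
  qed
qed

lemma card_Supp_eq:
  "card (Supp m n \<kappa> \<tau> jh kh p) =
     (\<Sum>j=0..m. card (if j = jh then {k\<in>{1..\<kappa>}. alpha p j k > 0} - {kh} else {k\<in>{1..\<kappa>}. alpha p j k > 0}))
   + (\<Sum>j=0..m. card {t\<in>{1..\<tau>}. beta p j t > 0})
   + (\<Sum>i=1..n. card {j\<in>{0..m}. gamma p j i \<noteq> 0})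
   + card {j\<in>{0..m}. theta p j \<noteq> 0}"
proof -
  define K where "K = (\<lambda>j. if j = jh then {k\<in>{1..\<kappa>}. alpha p j k > 0} - {kh} else {k\<in>{1..\<kappa>}. alpha p j k > 0})"
  define T where "T = (\<lambda>j. {t\<in>{1..\<tau>}. beta p j t > 0})"
  define G where "G = (\<lambda>i. {j\<in>{0..m}. gamma p j i \<noteq> 0})"
  define SA where "SA = (\<lambda>(j,k). VA j k) ` (SIGMA j:{0..m}. K j)"
  define SB where "SB = (\<lambda>(j,k). VB j k) ` (SIGMA j:{0..m}. T j)"
  define SG where "SG = (\<lambda>(i,j). VG j i) ` (SIGMA i:{1..n}. G i)"
  define ST where "ST = VT ` {j\<in>{0..m}. theta p j \<noteq> 0}"
  have eA: "{(j,k). j \<le> m \<and> k \<in> {1..\<kappa>} \<and> alpha p j k > 0 \<and> (j,k) \<noteq> (jh,kh)} = (SIGMA j:{0..m}. K j)"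
    by (auto simp: K_def split: if_splits)
  have eB: "{(j,t). j \<le> m \<and> t \<in> {1..\<tau>} \<and> beta p j t > 0} = (SIGMA j:{0..m}. T j)"
    by (auto simp: T_def)
  have eG: "(\<lambda>(j,i). VG j i) ` {(j,i). j \<le> m \<and> i \<in> {1..n} \<and> gamma p j i \<noteq> 0} = SG"
    unfolding SG_def G_def by force
  have eT: "{j. j \<le> m \<and> theta p j \<noteq> 0} = {j\<in>{0..m}. theta p j \<noteq> 0}" by auto
  have S: "Supp m n \<kappa> \<tau> jh kh p = SA \<union> SB \<union> SG \<union> ST"
    unfolding Supp_def eA eB eG eT SA_def SB_def ST_def by simp
  have fK: "finite (K j)" for j by (simp add: K_def)
  have fT: "finite (T j)" for j by (simp add: T_def)
  have fG: "finite (G j)" for j by (simp add: G_def)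
  have cA: "card SA = (\<Sum>j=0..m. card (K j))"
    unfolding SA_def by (subst card_image) (auto simp: inj_on_def fK)
  have cB: "card SB = (\<Sum>j=0..m. card (T j))"
    unfolding SB_def by (subst card_image) (auto simp: inj_on_def fT)
  have cG: "card SG = (\<Sum>i=1..n. card (G i))"
    unfolding SG_def by (subst card_image) (auto simp: inj_on_def fG)
  have cT: "card ST = card {j\<in>{0..m}. theta p j \<noteq> 0}"
    unfolding ST_def by (subst card_image) (auto simp: inj_on_def)
  have fin: "finite SA" "finite SB" "finite SG" "finite ST"
    unfolding SA_def SB_def SG_def ST_def by (auto simp: fK fT fG)
  have "card (SA \<union> SB \<union> SG \<union> ST) = card SA + card SB + card SG + card ST"
    using fin
    apply (subst card_Un_disjoint, simp, simp, force simp: SA_def SB_def SG_def ST_def)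
    apply (subst card_Un_disjoint, simp, simp, force simp: SA_def SB_def SG_def ST_def)
    apply (subst card_Un_disjoint, simp, simp, force simp: SA_def SB_def SG_def ST_def)
    by simp
  then show ?thesis unfolding S cA cB cG cT K_def T_def G_def by simp
qed

lemma partD:
  assumes ext: "is_extreme p {p \<in> Cset m n \<kappa> \<tau> A b c d E f. alpha p jh kh = 1}"
  shows "\<exists>U1 U2. U1 \<subseteq> {(i, j). i \<in> {1..n} \<and> j \<in> {1..m} \<and> Phi \<kappa> \<tau> A b E i j p = 0}
              \<and> U2 \<subseteq> {j \<in> {1..m}. Psi \<kappa> \<tau> c d f j p = 0}
              \<and> int (card U1) + int (card U2) \<ge>
                  (\<Sum>j=0..m. int (card (if j = jh then {k\<in>{1..\<kappa>}. alpha p j k > 0} - {kh}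
                        else {k\<in>{1..\<kappa>}. alpha p j k > 0})) + int (card {t\<in>{1..\<tau>}. beta p j t > 0}))
                  + (\<Sum>i=1..n. ind (gamma p 0 i))
                  - (\<Sum>i=1..n. \<Sum>j=1..m. ind (gamma p 0 i) * (1 - ind (gamma p j i)))
                  + ind (theta p 0)
                  - (\<Sum>j=1..m. ind (theta p 0) * (1 - ind (theta p j)))"
proof -
  have pC: "p \<in> Cset m n \<kappa> \<tau> A b c d E f" using ext by (simp add: is_extreme_def)
  define U1 where "U1 = (SIGMA i:{1..n}. {j\<in>{1..m}. Phi \<kappa> \<tau> A b E i j p = 0 \<and> gamma p 0 i = 0})"
  define U2 where "U2 = {j\<in>{1..m}. Psi \<kappa> \<tau> c d f j p = 0 \<and> theta p 0 = 0}"
  have s1: "U1 \<subseteq> {(i, j). i \<in> {1..n} \<and> j \<in> {1..m} \<and> Phi \<kappa> \<tau> A b E i j p = 0}" unfolding U1_def by auto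
  have s2: "U2 \<subseteq> {j \<in> {1..m}. Psi \<kappa> \<tau> c d f j p = 0}" unfolding U2_def by auto
  have cU1: "card U1 = (\<Sum>i=1..n. card {j\<in>{1..m}. Phi \<kappa> \<tau> A b E i j p = 0 \<and> gamma p 0 i = 0})"
    unfolding U1_def by simp
  have pi: "int (card {j\<in>{0..m}. gamma p j i \<noteq> 0}) + int (card {j\<in>{1..m}. Phi \<kappa> \<tau> A b E i j p = 0 \<and> gamma p 0 i = 0})
       = int m + ind (gamma p 0 i) - (\<Sum>j=1..m. ind (gamma p 0 i) * (1 - ind (gamma p j i)))" if "i \<in> {1..n}" for i
    by (rule per_i[where g = "\<lambda>j. gamma p j i"]) (use pC that in \<open>auto simp: Cset_def algebra_simps\<close>)
  have pt: "int (card {j\<in>{0..m}. theta p j \<noteq> 0}) + int (card U2)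
       = int m + ind (theta p 0) - (\<Sum>j=1..m. ind (theta p 0) * (1 - ind (theta p j)))"
    unfolding U2_def
    by (rule per_i[where g = "\<lambda>j. theta p j"]) (use pC in \<open>auto simp: Cset_def algebra_simps\<close>)
  have sumpi: "(\<Sum>i=1..n. int (card {j\<in>{0..m}. gamma p j i \<noteq> 0})) + int (card U1)
      = int n * int m + (\<Sum>i=1..n. ind (gamma p 0 i)) - (\<Sum>i=1..n. \<Sum>j=1..m. ind (gamma p 0 i) * (1 - ind (gamma p j i)))"
  proof -
    have "(\<Sum>i=1..n. int (card {j\<in>{0..m}. gamma p j i \<noteq> 0})) + int (card U1)
        = (\<Sum>i=1..n. int (card {j\<in>{0..m}. gamma p j i \<noteq> 0}) + int (card {j\<in>{1..m}. Phi \<kappa> \<tau> A b E i j p = 0 \<and> gamma p 0 i = 0}))"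
      by (simp add: cU1 sum.distrib)
    also have "\<dots> = (\<Sum>i=1..n. int m + ind (gamma p 0 i) - (\<Sum>j=1..m. ind (gamma p 0 i) * (1 - ind (gamma p j i))))"
      by (rule sum.cong) (use pi in blast)+
    also have "\<dots> = int n * int m + (\<Sum>i=1..n. ind (gamma p 0 i)) - (\<Sum>i=1..n. \<Sum>j=1..m. ind (gamma p 0 i) * (1 - ind (gamma p j i)))"
      by (simp add: sum.distrib sum_subtractf)
    finally show ?thesis .
  qed
  have cs: "card (Supp m n \<kappa> \<tau> jh kh p) \<le> n * m + m" by (rule card_Supp_le[OF ext])
  have cs': "int (\<Sum>j=0..m. card (if j = jh then {k\<in>{1..\<kappa>}. alpha p j k > 0} - {kh} else {k\<in>{1..\<kappa>}. alpha p j k > 0}))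
   + int (\<Sum>j=0..m. card {t\<in>{1..\<tau>}. beta p j t > 0})
   + int (\<Sum>i=1..n. card {j\<in>{0..m}. gamma p j i \<noteq> 0})
   + int (card {j\<in>{0..m}. theta p j \<noteq> 0}) \<le> int n * int m + int m"
    using cs unfolding card_Supp_eq by (simp only: of_nat_add[symmetric] of_nat_mult[symmetric] of_nat_le_iff)
  have kt: "(\<Sum>j=0..m. int (card (if j = jh then {k\<in>{1..\<kappa>}. alpha p j k > 0} - {kh}
                        else {k\<in>{1..\<kappa>}. alpha p j k > 0})) + int (card {t\<in>{1..\<tau>}. beta p j t > 0}))
     = int (\<Sum>j=0..m. card (if j = jh then {k\<in>{1..\<kappa>}. alpha p j k > 0} - {kh} else {k\<in>{1..\<kappa>}. alpha p j k > 0}))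
   + int (\<Sum>j=0..m. card {t\<in>{1..\<tau>}. beta p j t > 0})"
    by (simp add: sum.distrib)
  have "int (\<Sum>i=1..n. card {j\<in>{0..m}. gamma p j i \<noteq> 0}) = (\<Sum>i=1..n. int (card {j\<in>{0..m}. gamma p j i \<noteq> 0}))"
    by simp
  show ?thesis
    apply (rule exI[of _ U1], rule exI[of _ U2])
    using s1 s2 cs' kt sumpi pt \<open>int (\<Sum>i=1..n. _) = _\<close> by linarith
qed

theorem mainTheorem5:
  fixes m n \<kappa> \<tau> :: nat
    and A :: "nat \<Rightarrow> nat \<Rightarrow> nat \<Rightarrow> real" and b :: "nat \<Rightarrow> nat \<Rightarrow> real"
    and c :: "nat \<Rightarrow> nat \<Rightarrow> real" and d :: "nat \<Rightarrow> real"
    and E :: "nat \<Rightarrow> nat \<Rightarrow> real" and f :: "nat \<Rightarrow> real"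
    and kh jh :: nat
  assumes hm: "1 \<le> m"
    and hk: "kh \<in> {1..\<kappa>}"
    and hj: "jh \<le> m"
  defines "Ck \<equiv> {p \<in> Cset m n \<kappa> \<tau> A b c d E f. alpha p jh kh = 1}"
  shows
   "(\<forall>pb. is_extreme pb Ck \<longrightarrow>
      (let Kset = (\<lambda>j. if j = jh then {k\<in>{1..\<kappa>}. alpha pb j k > 0} - {kh}
                        else {k\<in>{1..\<kappa>}. alpha pb j k > 0});
           Tset = (\<lambda>j. {t\<in>{1..\<tau>}. beta pb j t > 0});
           Ph = (\<lambda>i j. Phi \<kappa> \<tau> A b E i j pb);
           Ps = (\<lambda>j. Psi \<kappa> \<tau> c d f j pb)
       in (\<Inter>j\<in>{0..m}. Tset j) = {}
        \<and> (\<forall>i\<in>{1..n}. gamma pb 0 i = Max ((\<lambda>j. pos (Ph i j)) ` {1..m})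
              \<and> (\<forall>j\<in>{1..m}. gamma pb j i = gamma pb 0 i - Ph i j))
        \<and> theta pb 0 = Max ((\<lambda>j. pos (Ps j)) ` {1..m})
        \<and> (\<forall>j\<in>{1..m}. theta pb j = theta pb 0 - Ps j)
        \<and> (\<exists>U1 U2. U1 \<subseteq> {(i, j). i \<in> {1..n} \<and> j \<in> {1..m} \<and> Ph i j = 0}
              \<and> U2 \<subseteq> {j \<in> {1..m}. Ps j = 0}
              \<and> int (card U1) + int (card U2) \<ge>
                  (\<Sum>j=0..m. int (card (Kset j)) + int (card (Tset j)))
                  + (\<Sum>i=1..n. ind (gamma pb 0 i))
                  - (\<Sum>i=1..n. \<Sum>j=1..m. ind (gamma pb 0 i) * (1 - ind (gamma pb j i)))
                  + ind (theta pb 0)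
                  - (\<Sum>j=1..m. ind (theta pb 0) * (1 - ind (theta pb j))))))
    \<and> (\<forall>pb. pi_wf m n \<kappa> \<tau> pb
           \<and> (\<forall>j\<le>m. (\<forall>k\<in>{1..\<kappa>}. 0 \<le> alpha pb j k) \<and> (\<forall>t\<in>{1..\<tau>}. 0 \<le> beta pb j t))
           \<and> alpha pb jh kh = 1
           \<and> (\<forall>i\<in>{1..n}. gamma pb 0 i = Max ((\<lambda>j. pos (Phi \<kappa> \<tau> A b E i j pb)) ` {1..m})
                 \<and> (\<forall>j\<in>{1..m}. gamma pb j i = gamma pb 0 i - Phi \<kappa> \<tau> A b E i j pb))
           \<and> theta pb 0 = Max ((\<lambda>j. pos (Psi \<kappa> \<tau> c d f j pb)) ` {1..m})
           \<and> (\<forall>j\<in>{1..m}. theta pb j = theta pb 0 - Psi \<kappa> \<tau> c d f j pb)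
         \<longrightarrow> pb \<in> Ck)"
proof -
  have mp: "0 \<le> Max ((\<lambda>j. pos (F j)) ` {1..m}) \<and> (\<forall>j\<in>{1..m}. F j \<le> Max ((\<lambda>j. pos (F j)) ` {1..m}))"
    for F :: "nat \<Rightarrow> real"
  proof -
    have "pos (F j) \<le> Max ((\<lambda>j. pos (F j)) ` {1..m})" if "j \<in> {1..m}" for j
      using that by (intro Max_ge) auto
    moreover have "1 \<in> {1..m}" using hm by simp
    ultimately show ?thesis by (force simp: pos_def)
  qed
  show ?thesis
    apply (rule conjI)
    subgoal
      apply (intro allI impI)
      subgoal premises prems for pb
      proof -
        have ext: "is_extreme pb {p \<in> Cset m n \<kappa> \<tau> A b c d E f. alpha p jh kh = 1}"
          using prems by (simp add: Ck_def)
        have pC: "pb \<in> Cset m n \<kappa> \<tau> A b c d E f" using ext by (simp add: is_extreme_def)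
        have A: "(\<Inter>j\<in>{0..m}. {t\<in>{1..\<tau>}. beta pb j t > 0}) = {}" by (rule partA[OF ext])
        have B: "\<forall>i\<in>{1..n}. gamma pb 0 i = Max ((\<lambda>j. pos (Phi \<kappa> \<tau> A b E i j pb)) ` {1..m})
              \<and> (\<forall>j\<in>{1..m}. gamma pb j i = gamma pb 0 i - Phi \<kappa> \<tau> A b E i j pb)"
          using partB[OF ext hm] pC by (auto simp: Cset_def algebra_simps)
        have C: "theta pb 0 = Max ((\<lambda>j. pos (Psi \<kappa> \<tau> c d f j pb)) ` {1..m})"
          by (rule partC[OF ext hm])
        have C2: "\<forall>j\<in>{1..m}. theta pb j = theta pb 0 - Psi \<kappa> \<tau> c d f j pb"
          using pC by (auto simp: Cset_def algebra_simps)
        note D = partD[OF ext]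
        show ?thesis unfolding Let_def
          apply (intro conjI)
              apply (rule A)
             apply (rule B)
            apply (rule C)
           apply (rule C2)
          by (rule D)
      qed
      done
    subgoal
      apply (intro allI impI)
      subgoal premises H for pb
      proof -
        have wf: "pi_wf m n \<kappa> \<tau> pb" using H by blast
        have ab: "\<forall>j\<le>m. (\<forall>k\<in>{1..\<kappa>}. 0 \<le> alpha pb j k) \<and> (\<forall>t\<in>{1..\<tau>}. 0 \<le> beta pb j t)" using H by blast
        have a1: "alpha pb jh kh = 1" using H by blast
        have G: "\<forall>i\<in>{1..n}. gamma pb 0 i = Max ((\<lambda>j. pos (Phi \<kappa> \<tau> A b E i j pb)) ` {1..m})
                 \<and> (\<forall>j\<in>{1..m}. gamma pb j i = gamma pb 0 i - Phi \<kappa> \<tau> A b E i j pb)" using H by blast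
        have T0: "theta pb 0 = Max ((\<lambda>j. pos (Psi \<kappa> \<tau> c d f j pb)) ` {1..m})" using H by blast
        have T1: "\<forall>j\<in>{1..m}. theta pb j = theta pb 0 - Psi \<kappa> \<tau> c d f j pb" using H by blast
        have g: "0 \<le> gamma pb j i" if "j \<le> m" "i \<in> {1..n}" for j i
        proof (cases "j = 0")
          case True then show ?thesis using G that mp[of "\<lambda>j. Phi \<kappa> \<tau> A b E i j pb"] by simp
        next
          case False
          then have jm: "j \<in> {1..m}" using that by simp
          then show ?thesis using G that mp[of "\<lambda>j. Phi \<kappa> \<tau> A b E i j pb"] by simp
        qed
        have t: "0 \<le> theta pb j" if "j \<le> m" for j
        proof (cases "j = 0")
          case True then show ?thesis using T0 mp[of "\<lambda>j. Psi \<kappa> \<tau> c d f j pb"] by simp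
        next
          case False
          then have jm: "j \<in> {1..m}" using that by simp
          then show ?thesis using T0 T1 mp[of "\<lambda>j. Psi \<kappa> \<tau> c d f j pb"] by simp
        qed
        show ?thesis unfolding Ck_def Cset_def using wf ab a1 g t G T1 by auto
      qed
      done
    done
qed

end
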